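(* In the model described in the context, suppose $\triangle C>0$, and let $X(0)$ be the set of symmetric Stackelberg equilibria. Let $\zeta_1=(M+1)\triangle C+\min\big(MN\triangle C,\ MNk+2M\sqrt{Nk\triangle C}\big)$. Then there exists $x\in X(0)$ with $y_j(\mathbf0,x\mathbf1)=0$ if and only if $\alpha_x\le\zeta_1$. Furthermore, such an $x$ is given by \[x=\begin{cases}\frac1{M+1}\alpha_x,&\text{if }0\le\alpha_x<(M+1)\triangle C,\\ \frac1M(\alpha_x-\triangle C),&\text{if }(M+1)\triangle C\le\alpha_x\le\zeta_1.\end{cases}\]
   Context: Model: $M\ge1$ leaders and $N\ge2$ followers; inverse demand $P(q)=\alpha-\beta q$, $\alpha,\beta>0$; leader marginal cost $C$, follower marginal cost $c$, $c\ge C>0$; follower capacity $k>0$. Leader $i$ produces $x_i\ge0$; follower $j$ has forward position $f_j\in\mathbb{R}$ and chooses spot production $y_j\in[0,k]$. Given $\mathbf f,\mathbf x$, the spot market is the game among followers where follower $j$ chooses $y_j\in[0,k]$ to maximize $P(\sum_ix_i+\sum_{j'}y_{j'})(y_j-f_j)-cy_j$; its unique Nash equilibrium is $\mathbf y(\mathbf f,\mathbf x)=(y_1(\mathbf f,\mathbf x),\dots,y_N(\mathbf f,\mathbf x))$. Leader $i$'s payoff is $\psi_i=(P(\sum_ix_i+\sum_{j'}y_{j'}(\mathbf f,\mathbf x))-C)x_i$; $\psi_i(\bar x;x\mathbf1,\mathbf f)$ denotes this payoff when leader $i$ produces $\bar x$ and all other leaders produce $x$. $X(0)=\{x\in\mathbb{R}_+:\psi_i(x;x\mathbf1,\mathbf0)\ge\psi_i(\bar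 x;x\mathbf1,\mathbf0)\ \forall\bar x\in\mathbb{R}_+,\ \forall i\}$. $\alpha_x=(\alpha-C)/\beta$, $\triangle C=(c-C)/\beta$. *)

theory Defs
  imports Complex_Main
begin

definition price :: "real \<Rightarrow> real \<Rightarrow> real \<Rightarrow> real" where
  "price \<alpha> \<beta> q = \<alpha> - \<beta> * q"

definition follower_payoff ::
  "real \<Rightarrow> real \<Rightarrow> real \<Rightarrow> nat \<Rightarrow> (nat \<Rightarrow> real) \<Rightarrow> real \<Rightarrow> (nat \<Rightarrow> real) \<Rightarrow> nat \<Rightarrow> real" where
  "follower_payoff \<alpha> \<beta> c N f Xtot y j =
     price \<alpha> \<beta> (Xtot + (\<Sum>j'<N. y j')) * (y j - f j) - c * y j"

text \<open>Nash equilibrium of the spot market (entries beyond N fixed to 0 for uniqueness of representation).\<close>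
definition spot_NE ::
  "real \<Rightarrow> real \<Rightarrow> real \<Rightarrow> real \<Rightarrow> nat \<Rightarrow> (nat \<Rightarrow> real) \<Rightarrow> real \<Rightarrow> (nat \<Rightarrow> real) \<Rightarrow> bool" where
  "spot_NE \<alpha> \<beta> c k N f Xtot y \<longleftrightarrow>
     (\<forall>j. N \<le> j \<longrightarrow> y j = 0) \<and>
     (\<forall>j<N. 0 \<le> y j \<and> y j \<le> k \<and>
        (\<forall>yj. 0 \<le> yj \<and> yj \<le> k \<longrightarrow>
           follower_payoff \<alpha> \<beta> c N f Xtot (y(j := yj)) j \<le> follower_payoff \<alpha> \<beta> c N f Xtot y j))"

definition spot_eq ::
  "real \<Rightarrow> real \<Rightarrow> real \<Rightarrow> real \<Rightarrow> nat \<Rightarrow> nat \<Rightarrow> (nat \<Rightarrow> real) \<Rightarrow> (nat \<Rightarrow> real) \<Rightarrow> (nat \<Rightarrow> real)" where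
  "spot_eq \<alpha> \<beta> c k M N f x = (THE y. spot_NE \<alpha> \<beta> c k N f (\<Sum>i<M. x i) y)"

definition leader_payoff ::
  "real \<Rightarrow> real \<Rightarrow> real \<Rightarrow> real \<Rightarrow> real \<Rightarrow> nat \<Rightarrow> nat \<Rightarrow> (nat \<Rightarrow> real) \<Rightarrow> (nat \<Rightarrow> real) \<Rightarrow> nat \<Rightarrow> real" where
  "leader_payoff \<alpha> \<beta> C c k M N f x i =
     (price \<alpha> \<beta> ((\<Sum>i'<M. x i') + (\<Sum>j<N. spot_eq \<alpha> \<beta> c k M N f x j)) - C) * x i"

text \<open>X(0): symmetric Stackelberg equilibria with zero forward positions.
  psi_i(xb; x1, 0) is leader_payoff with profile (\<lambda>_. x)(i := xb).\<close>
definition X0 ::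
  "real \<Rightarrow> real \<Rightarrow> real \<Rightarrow> real \<Rightarrow> real \<Rightarrow> nat \<Rightarrow> nat \<Rightarrow> real set" where
  "X0 \<alpha> \<beta> C c k M N =
     {x. 0 \<le> x \<and> (\<forall>i<M. \<forall>xb. 0 \<le> xb \<longrightarrow>
        leader_payoff \<alpha> \<beta> C c k M N (\<lambda>_. 0) ((\<lambda>_. x)(i := xb)) i
          \<le> leader_payoff \<alpha> \<beta> C c k M N (\<lambda>_. 0) (\<lambda>_. x) i)}"

end

theory Submission
  imports Defs
begin


definition clampk :: "real \<Rightarrow> real \<Rightarrow> real" where
  "clampk k v = max 0 (min v k)"

lemma sum_upd:
  fixes y :: "nat \<Rightarrow> real"
  assumes "j < N"
  shows "(\<Sum>j'<N. (y(j:=z)) j') = (\<Sum>j'<N. y j') - y j + z"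
proof -
  have "(\<Sum>j'<N. (y(j:=z)) j') = (y(j:=z)) j + (\<Sum>j'\<in>{..<N}-{j}. (y(j:=z)) j')"
    using assms by (simp add: sum.remove)
  moreover have "(\<Sum>j'<N. y j') = y j + (\<Sum>j'\<in>{..<N}-{j}. y j')"
    using assms by (simp add: sum.remove)
  moreover have "(\<Sum>j'\<in>{..<N}-{j}. (y(j:=z)) j') = (\<Sum>j'\<in>{..<N}-{j}. y j')"
    by (rule sum.cong) auto
  ultimately show ?thesis by simp
qed

lemma cand_NE:
  fixes \<alpha> \<beta> c k X :: real and N :: nat
  assumes b: "\<beta> > 0" and k: "k > 0"
  defines "w \<equiv> clampk k ((\<alpha> - c - \<beta> * X) / ((real N + 1) * \<beta>))"
  shows "spot_NE \<alpha> \<beta> c k N (\<lambda>_. 0) X (\<lambda>j. if j < N then w else 0)"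
proof -
  let ?y = "\<lambda>j. if j < N then w else 0"
  define g where "g = (\<alpha> - c - \<beta> * X) / ((real N + 1) * \<beta>)"
  define G where "G = \<alpha> - c - \<beta> * X"
  have nz: "(real N + 1) * \<beta> \<noteq> 0" using b by simp
  have Gg: "G = (real N + 1) * \<beta> * g" unfolding g_def G_def using nz by simp
  have w0: "0 \<le> w" "w \<le> k" unfolding w_def clampk_def using k by auto
  have sumy: "(\<Sum>j'<N. ?y j') = real N * w" by simp
  { fix j z assume j: "j < N" and z: "0 \<le> z" "z \<le> k"
    have su: "(\<Sum>j'<N. (?y(j:=z)) j') = real N * w - w + z"
      using sum_upd[OF j, of ?y z] sumy j by simp
    have key: "(w - z) * (G - \<beta> * (real N - 1) * w - \<beta> * (w + z)) \<ge> 0"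
    proof (cases "g \<le> 0")
      case True
      hence "w = 0" unfolding w_def g_def[symmetric] clampk_def by auto
      moreover have "G \<le> 0" using Gg True b by (simp add: mult_nonneg_nonpos)
      moreover have "G - \<beta> * z \<le> 0" using \<open>G \<le> 0\<close> z b
        by (smt (verit) mult_nonneg_nonneg)
      ultimately show ?thesis using z b by (simp add: mult_nonneg_nonpos)
    next
      case False
      show ?thesis
      proof (cases "g \<ge> k")
        case True
        hence ww: "w = k" unfolding w_def g_def[symmetric] clampk_def using k by auto
        have "G \<ge> (real N + 1) * \<beta> * k" using Gg True b by (simp add: mult_left_mono)
        hence "G - \<beta> * (real N - 1) * w - \<beta> * (w + z) \<ge> \<beta> * (k - z)"
          using ww by (simp add: algebra_simps)
        moreover have "\<beta> * (k - z) \<ge> 0" using b z by simp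
        ultimately show ?thesis using ww z by (metis diff_ge_0_iff_ge mult_nonneg_nonneg order_trans)
      next
        case False2: False
        hence ww: "w = g" unfolding w_def g_def[symmetric] clampk_def using False by auto
        have "(w - z) * (G - \<beta> * (real N - 1) * w - \<beta> * (w + z)) = \<beta> * (g - z)^2"
          using ww Gg by (simp add: algebra_simps power2_eq_square)
        thus ?thesis using b by simp
      qed
    qed
    have "follower_payoff \<alpha> \<beta> c N (\<lambda>_. 0) X (?y(j := z)) j \<le> follower_payoff \<alpha> \<beta> c N (\<lambda>_. 0) X ?y j"
      unfolding follower_payoff_def price_def su sumy using j key G_def
      by (simp add: algebra_simps)
  }
  thus ?thesis unfolding spot_NE_def using w0 by auto
qed

lemma NE_foc:
  fixes \<beta> k y E :: real
  assumes b: "\<beta> > 0" and y: "0 \<le> y" "y \<le> k"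
    and H: "\<And>z. 0 \<le> z \<Longrightarrow> z \<le> k \<Longrightarrow> (E - \<beta> * z) * z \<le> (E - \<beta> * y) * y"
  shows "y < k \<Longrightarrow> E - 2 * \<beta> * y \<le> 0" and "y > 0 \<Longrightarrow> E - 2 * \<beta> * y \<ge> 0"
proof -
  define B where "B = E - 2 * \<beta> * y"
  have diff: "(E - \<beta> * (y + e)) * (y + e) - (E - \<beta> * y) * y = e * (B - \<beta> * e)" for e
    unfolding B_def by (simp add: algebra_simps)
  { assume yk: "y < k"
    show "E - 2 * \<beta> * y \<le> 0"
    proof (rule ccontr)
      assume "\<not> ?thesis" hence Bp: "B > 0" unfolding B_def by simp
      define \<delta> where "\<delta> = min (k - y) (B / (2 * \<beta>))"
      have dp: "\<delta> > 0" unfolding \<delta>_def using yk Bp b by simp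
      have d1: "\<delta> \<le> k - y" and d2: "\<delta> \<le> B / (2*\<beta>)" unfolding \<delta>_def by auto
      have "\<delta> * (B - \<beta> * \<delta>) \<le> 0" using H[of "y + \<delta>"] diff[of \<delta>] y dp d1 by simp
      hence "B - \<beta> * \<delta> \<le> 0" using dp by (simp add: mult_le_0_iff)
      moreover have "\<beta> * \<delta> \<le> B / 2" using d2 b by (simp add: field_simps)
      ultimately show False using Bp by simp
    qed }
  { assume yp: "y > 0"
    show "E - 2 * \<beta> * y \<ge> 0"
    proof (rule ccontr)
      assume "\<not> ?thesis" hence Bn: "B < 0" unfolding B_def by simp
      define \<delta> where "\<delta> = min y (- B / (2 * \<beta>))"
      have dp: "\<delta> > 0" unfolding \<delta>_def using yp Bn b by (simp add: divide_neg_pos)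
      have d1: "\<delta> \<le> y" and d2: "\<delta> \<le> - B / (2*\<beta>)" unfolding \<delta>_def by auto
      have "(- \<delta>) * (B + \<beta> * \<delta>) \<le> 0" using H[of "y - \<delta>"] diff[of "- \<delta>"] y dp d1 by simp
      hence "B + \<beta> * \<delta> \<ge> 0" using dp by (simp add: zero_le_mult_iff)
      moreover have "\<beta> * \<delta> \<le> - B / 2" using d2 b by (simp add: field_simps)
      ultimately show False using Bn by simp
    qed }
qed

lemma NE_unique:
  fixes \<alpha> \<beta> c k X :: real and N :: nat
  assumes b: "\<beta> > 0" and k: "k > 0"
    and ne: "spot_NE \<alpha> \<beta> c k N (\<lambda>_. 0) X y"
  shows "y = (\<lambda>j. if j < N then clampk k ((\<alpha> - c - \<beta> * X) / ((real N + 1) * \<beta>)) else 0)"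
proof -
  define Y where "Y = (\<Sum>j'<N. y j')"
  define D where "D = \<alpha> - c - \<beta> * X - \<beta> * Y"
  have out: "\<And>j. N \<le> j \<Longrightarrow> y j = 0" using ne unfolding spot_NE_def by auto
  have foc: "(y j < k \<longrightarrow> D - \<beta> * y j \<le> 0) \<and> (y j > 0 \<longrightarrow> D - \<beta> * y j \<ge> 0)
        \<and> 0 \<le> y j \<and> y j \<le> k" if j: "j < N" for j
  proof -
    define E where "E = \<alpha> - c - \<beta> * X - \<beta> * (Y - y j)"
    have yb: "0 \<le> y j" "y j \<le> k" using ne j unfolding spot_NE_def by auto
    have H: "(E - \<beta> * z) * z \<le> (E - \<beta> * y j) * y j" if z: "0 \<le> z" "z \<le> k" for z
    proof -
      have "follower_payoff \<alpha> \<beta> c N (\<lambda>_. 0) X (y(j := z)) j \<le> follower_payoff \<alpha> \<beta> c N (\<lambda>_. 0) X y j"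
        using ne j z unfolding spot_NE_def by auto
      thus ?thesis unfolding follower_payoff_def price_def sum_upd[OF j] Y_def[symmetric] E_def
        by (simp add: algebra_simps)
    qed
    have "E - 2 * \<beta> * y j = D - \<beta> * y j" unfolding E_def D_def by (simp add: algebra_simps)
    thus ?thesis using NE_foc[OF b yb H] yb by auto
  qed
  have eq: "y j = y l" if "j < N" "l < N" for j l
  proof (rule ccontr)
    assume "y j \<noteq> y l"
    hence "y j < y l \<or> y l < y j" by auto
    thus False
    proof
      assume lt: "y j < y l"
      hence "y j < k" "y l > 0" using foc[OF that(1)] foc[OF that(2)] by auto
      thus False using foc[OF that(1)] foc[OF that(2)] lt b by (smt (verit) mult_strict_left_mono)
    next
      assume lt: "y l < y j"
      hence "y l < k" "y j > 0" using foc[OF that(1)] foc[OF that(2)] by auto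
      thus False using foc[OF that(1)] foc[OF that(2)] lt b by (smt (verit) mult_strict_left_mono)
    qed
  qed
  show ?thesis
  proof (cases "N = 0")
    case True thus ?thesis using out by auto
  next
    case False
    hence N0: "0 < N" by simp
    define q where "q = y 0"
    have yq: "\<And>j. j < N \<Longrightarrow> y j = q" unfolding q_def using eq N0 by blast
    have Yq: "Y = real N * q" unfolding Y_def using yq by simp
    define g where "g = (\<alpha> - c - \<beta> * X) / ((real N + 1) * \<beta>)"
    have nz: "(real N + 1) * \<beta> > 0" using b by simp
    have Gg: "\<alpha> - c - \<beta> * X = (real N + 1) * \<beta> * g" unfolding g_def using nz b by simp
    have F: "(q < k \<longrightarrow> D - \<beta> * q \<le> 0) \<and> (q > 0 \<longrightarrow> D - \<beta> * q \<ge> 0) \<and> 0 \<le> q \<and> q \<le> k"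
      using foc[OF N0] q_def by simp
    have Dq: "D - \<beta> * q = (real N + 1) * \<beta> * (g - q)"
      unfolding D_def Yq using Gg by (simp add: algebra_simps)
    have c1: "q < k \<Longrightarrow> g \<le> q" using F Dq nz b by (simp add: mult_le_0_iff)
    have c2: "q > 0 \<Longrightarrow> q \<le> g" using F Dq nz by (simp add: zero_le_mult_iff)
    have "q = clampk k g" unfolding clampk_def using c1 c2 F by (cases "q < k"; cases "q > 0") auto
    thus ?thesis using yq out g_def by (auto simp: fun_eq_iff)
  qed
qed

lemma spot_eq_char:
  fixes \<alpha> \<beta> c k :: real and M N :: nat
  assumes b: "\<beta> > 0" and k: "k > 0"
  shows "spot_eq \<alpha> \<beta> c k M N f' x = (if f' = (\<lambda>_. 0) then (\<lambda>j. if j < N then clampk k ((\<alpha> - c - \<beta> * (\<Sum>i<M. x i)) / ((real N + 1) * \<beta>)) else 0) else spot_eq \<alpha> \<beta> c k M N f' x)"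
  using the_equality[of "spot_NE \<alpha> \<beta> c k N (\<lambda>_. 0) (\<Sum>i<M. x i)", OF cand_NE[OF b k] NE_unique[OF b k]]
  unfolding spot_eq_def by auto




lemma sqrt_bound_le:
  fixes x d n k :: real
  assumes d: "d > 0" and n: "n > 0" and k: "k > 0" and xd: "d \<le> x"
    and h: "x - d \<le> n * k + 2 * sqrt (n * k * d)" and B: "x + d - n * k \<ge> 0"
  shows "(x + d - n * k)^2 \<le> 4 * x * d"
proof -
  define s r q where "s = sqrt x" and "r = sqrt d" and "q = sqrt (n * k)"
  have x0: "x \<ge> 0" using d xd by simp
  have s2: "s^2 = x" unfolding s_def using x0 by simp
  have r2: "r^2 = d" unfolding r_def using d by simp
  have q2: "q^2 = n * k" unfolding q_def using n k by simp
  have nn: "s \<ge> 0" "r \<ge> 0" "q \<ge> 0" unfolding s_def r_def q_def using x0 d n k by (simp_all add: less_imp_le)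
  have sq: "sqrt (n * k * d) = q * r" unfolding q_def r_def by (simp add: real_sqrt_mult)
  have "s^2 \<le> (q + r)^2" using h s2 r2 q2 sq by (simp add: power2_sum algebra_simps)
  hence "s \<le> q + r" using nn power2_le_imp_le[of s "q + r"] by simp
  moreover have "r \<le> s" unfolding r_def s_def using xd by simp
  ultimately have "(s - r)^2 \<le> q^2" using nn power_mono[of "s - r" q 2] by simp
  hence Bl: "x + d - n * k \<le> 2 * s * r" using s2 r2 q2 by (simp add: power2_diff algebra_simps)
  have "(x + d - n * k)^2 \<le> (2 * s * r)^2" using B Bl power_mono[of "x + d - n * k" "2 * s * r" 2] by simp
  also have "\<dots> = 4 * x * d" using s2 r2 by (simp add: power_mult_distrib)
  finally show ?thesis .
qed

lemma sqrt_bound_gt: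
  fixes x d n k :: real
  assumes d: "d > 0" and n: "n > 0" and k: "k > 0" and xd: "d \<le> x"
    and h: "x - d > n * k + 2 * sqrt (n * k * d)"
  shows "(x + d - n * k)^2 > 4 * x * d" and "x + d - n * k \<ge> 0"
proof -
  define s r q where "s = sqrt x" and "r = sqrt d" and "q = sqrt (n * k)"
  have x0: "x \<ge> 0" using d xd by simp
  have s2: "s^2 = x" unfolding s_def using x0 by simp
  have r2: "r^2 = d" unfolding r_def using d by simp
  have q2: "q^2 = n * k" unfolding q_def using n k by simp
  have nn: "s \<ge> 0" "r \<ge> 0" "q \<ge> 0" unfolding s_def r_def q_def using x0 d n k by (simp_all add: less_imp_le)
  have sq: "sqrt (n * k * d) = q * r" unfolding q_def r_def by (simp add: real_sqrt_mult)
  have "(q + r)^2 < s^2" using h s2 r2 q2 sq by (simp add: power2_sum algebra_simps)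
  hence "q + r < s" using nn power_less_imp_less_base[of "q + r" 2 s] by simp
  hence "q^2 < (s - r)^2" using nn power_strict_mono[of q "s - r" 2] by simp
  hence Bl: "x + d - n * k > 2 * s * r" using s2 r2 q2 by (simp add: power2_diff algebra_simps)
  have "0 \<le> 2 * s * r" using nn by simp
  thus "x + d - n * k \<ge> 0" using Bl by linarith
  have "(2 * s * r)^2 < (x + d - n * k)^2" using Bl nn power_strict_mono[of "2*s*r" "x + d - n * k" 2] by simp
  moreover have "(2 * s * r)^2 = 4 * x * d" using s2 r2 by (simp add: power_mult_distrib)
  ultimately show "(x + d - n * k)^2 > 4 * x * d" by simp
qed




definition Qf :: "real \<Rightarrow> real \<Rightarrow> real \<Rightarrow> real \<Rightarrow> real \<Rightarrow> real \<Rightarrow> real \<Rightarrow> real" where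
  "Qf a d k m n x t = t * (a - (m - 1) * x - t - n * clampk k ((a - d - (m - 1) * x - t) / (n + 1)))"

lemma case2_core:
  fixes x d n k t :: real
  assumes d: "d > 0" and n: "n > 0" and k: "k > 0" and xd: "d \<le> x"
    and h1: "x \<le> (n + 1) * d" and h2: "x - d \<le> n * k + 2 * sqrt (n * k * d)" and t: "t \<ge> 0"
  shows "t * (x + d - t - n * clampk k ((x - t) / (n + 1))) \<le> x * d"
proof -
  define v where "v = (x - t) / (n + 1)"
  have n1: "n + 1 > 0" using n by simp
  show ?thesis
  proof (cases "t \<ge> x")
    case True
    hence "v \<le> 0" unfolding v_def using n1 by (simp add: divide_nonpos_pos)
    hence cl: "clampk k v = 0" unfolding clampk_def using k by simp
    have "t * (x + d - t) - x * d = (t - x) * (d - t)" by (simp add: algebra_simps)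
    moreover have "(t - x) * (d - t) \<le> 0" using True xd by (simp add: mult_nonneg_nonpos)
    ultimately show ?thesis using cl v_def by simp
  next
    case False
    hence vp: "v > 0" unfolding v_def using n1 by simp
    show ?thesis
    proof (cases "v \<le> k")
      case True
      hence cl: "clampk k v = v" unfolding clampk_def using vp by simp
      have "t * (x + d - t - n * v) - x * d = (t - x) * ((n + 1) * d - t) / (n + 1)"
        unfolding v_def using n1 by (simp add: field_simps)
      moreover have "(t - x) * ((n + 1) * d - t) \<le> 0" using False h1 by (simp add: mult_nonpos_nonneg)
      hence "(t - x) * ((n + 1) * d - t) / (n + 1) \<le> 0" using n1 by (simp add: divide_nonpos_pos)
      ultimately have "t * (x + d - t - n * v) \<le> x * d" by linarith
      thus ?thesis using cl v_def by simp
    next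
      case False2: False
      hence cl: "clampk k v = k" unfolding clampk_def using k by simp
      define B where "B = x + d - n * k"
      have e: "t * (x + d - t - n * clampk k ((x - t) / (n + 1))) = t * (B - t)"
        using cl unfolding B_def v_def by simp
      show ?thesis
      proof (cases "B \<ge> 0")
        case True
        have "4 * (t * (B - t)) \<le> B^2" using sum_squares_ge_zero[of 0 "B - 2*t"]
          by (simp add: power2_eq_square algebra_simps)
        also have "\<dots> \<le> 4 * x * d" unfolding B_def using sqrt_bound_le[OF d n k xd h2] True B_def by simp
        finally show ?thesis unfolding e by simp
      next
        case False
        hence "t * (B - t) \<le> 0" using t by (simp add: mult_nonneg_nonpos)
        moreover have "x * d \<ge> 0" using xd d by simp
        ultimately show ?thesis unfolding e by simp
      qed
    qed
  qed
qed

lemma clamp_nonneg: "k > 0 \<Longrightarrow> clampk k v \<ge> 0" unfolding clampk_def by simp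
lemma clamp_zero: "k > 0 \<Longrightarrow> v \<le> 0 \<Longrightarrow> clampk k v = 0" unfolding clampk_def by simp
lemma clamp_zero_iff: "k > 0 \<Longrightarrow> clampk k v = 0 \<longleftrightarrow> v \<le> 0" unfolding clampk_def by auto

lemma Qxx: "Qf a d k m n x x = x * (a - m * x - n * clampk k ((a - d - m * x) / (n + 1)))"
  unfolding Qf_def by (simp add: algebra_simps)

lemma Q_ub:
  assumes "k > 0" "n \<ge> 0" "t \<ge> 0"
  shows "Qf a d k m n x t \<le> t * (a - (m - 1) * x - t)"
proof -
  have "n * clampk k ((a - d - (m - 1) * x - t) / (n + 1)) \<ge> 0"
    using assms clamp_nonneg by simp
  thus ?thesis unfolding Qf_def using assms(3) by (simp add: mult_left_mono)
qed

lemma Q_neg: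
  assumes k: "k > 0" and n: "n \<ge> 0" and d: "d > 0" and a: "a < 0" and t: "t \<ge> 0"
  shows "Qf a d k m n 0 t \<le> Qf a d k m n 0 0"
proof -
  have "Qf a d k m n 0 t \<le> t * (a - t)" using Q_ub[OF k n t, of a d m 0] by simp
  also have "\<dots> \<le> 0" using a t by (simp add: mult_nonneg_nonpos)
  finally show ?thesis unfolding Qf_def by simp
qed

lemma Q_case1:
  assumes k: "k > 0" and n: "n \<ge> 0" and d: "d > 0" and m: "m \<ge> 1"
    and a0: "0 \<le> a" and a1: "a < (m + 1) * d" and t: "t \<ge> 0"
  defines "x \<equiv> a / (m + 1)"
  shows "Qf a d k m n x t \<le> Qf a d k m n x x" and "clampk k ((a - d - m * x) / (n + 1)) = 0"
proof -
  have m1: "m + 1 > 0" using m by simp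
  have ax: "a = (m + 1) * x" unfolding x_def using m1 by simp
  have xd: "x < d" using a1 ax m1 by (metis mult_less_cancel_left_pos)
  have "(a - d - m * x) \<le> 0" using ax xd by (simp add: algebra_simps)
  hence "(a - d - m * x) / (n + 1) \<le> 0" using n by (simp add: divide_nonpos_pos)
  thus cl: "clampk k ((a - d - m * x) / (n + 1)) = 0" using clamp_zero k by simp
  have "Qf a d k m n x t \<le> t * (a - (m - 1) * x - t)" using Q_ub[OF k n t] .
  also have "\<dots> = t * (2 * x - t)" using ax by (simp add: algebra_simps)
  also have "\<dots> \<le> x * x" using sum_squares_ge_zero[of 0 "t - x"] by (simp add: power2_eq_square algebra_simps)
  also have "\<dots> = Qf a d k m n x x" unfolding Qxx cl using ax by (simp add: algebra_simps)
  finally show "Qf a d k m n x t \<le> Qf a d k m n x x" .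
qed

lemma Q_case2:
  assumes k: "k > 0" and n: "n > 0" and d: "d > 0" and m: "m \<ge> 1"
    and a0: "(m + 1) * d \<le> a" and h1: "a - (m + 1) * d \<le> m * n * d"
    and h2: "a - (m + 1) * d \<le> m * n * k + 2 * m * sqrt (n * k * d)" and t: "t \<ge> 0"
  defines "x \<equiv> (a - d) / m"
  shows "Qf a d k m n x t \<le> Qf a d k m n x x" and "clampk k ((a - d - m * x) / (n + 1)) = 0"
proof -
  have m0: "m > 0" using m by simp
  have ax: "a = m * x + d" unfolding x_def using m0 by simp
  thus cl: "clampk k ((a - d - m * x) / (n + 1)) = 0" using clamp_zero k by simp
  have e1: "a - (m + 1) * d = m * (x - d)" using ax by (simp add: algebra_simps)
  have "0 \<le> m * (x - d)" using a0 e1 by simp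
  hence xd: "d \<le> x" using m0 by (simp add: zero_le_mult_iff)
  have "m * (x - d) \<le> m * (n * d)" using h1 e1 by (simp add: algebra_simps)
  hence "x - d \<le> n * d" using m0 by simp
  hence H1: "x \<le> (n + 1) * d" by (simp add: algebra_simps)
  have "m * (x - d) \<le> m * (n * k + 2 * sqrt (n * k * d))" using h2 e1 by (simp add: algebra_simps)
  hence H2: "x - d \<le> n * k + 2 * sqrt (n * k * d)" using m0 by simp
  have "Qf a d k m n x t = t * (x + d - t - n * clampk k ((x - t) / (n + 1)))"
    unfolding Qf_def using ax by (simp add: algebra_simps)
  also have "\<dots> \<le> x * d" using case2_core[OF d n k xd H1 H2 t] .
  also have "\<dots> = Qf a d k m n x x" unfolding Qxx cl using ax by (simp add: algebra_simps)
  finally show "Qf a d k m n x t \<le> Qf a d k m n x x" .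
qed




lemma Q_conv:
  assumes k: "k > 0" and n: "n \<ge> 1" and d: "d > 0" and m: "m \<ge> 1" and x0: "x \<ge> 0"
    and opt: "\<And>t. t \<ge> 0 \<Longrightarrow> Qf a d k m n x t \<le> Qf a d k m n x x"
    and cl: "clampk k ((a - d - m * x) / (n + 1)) = 0"
  shows "a \<le> (m + 1) * d + min (m * n * d) (m * n * k + 2 * m * sqrt (n * k * d))"
proof (rule ccontr)
  assume "\<not> ?thesis"
  hence A: "a > (m + 1) * d + min (m * n * d) (m * n * k + 2 * m * sqrt (n * k * d))" by simp
  have m0: "m > 0" and n0: "n > 0" and n1: "n + 1 > 0" using m n by auto
  have sq0: "sqrt (n * k * d) \<ge> 0" using n0 k d by simp
  have "m * n * d > 0" using m0 n0 d by simp
  moreover have "m * n * k + 2 * m * sqrt (n * k * d) > 0" using m0 n0 k sq0 by (simp add: add_pos_nonneg)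
  ultimately have A1: "a > (m + 1) * d" using A by linarith
  have "(a - d - m * x) / (n + 1) \<le> 0" using cl clamp_zero_iff[OF k] by simp
  hence mx: "a - d \<le> m * x" using n1 by (simp add: divide_le_0_iff)
  have QXX: "Qf a d k m n x x = x * (a - m * x)" unfolding Qxx cl by simp
  define S where "S = (m - 1) * x"
  have Qform: "Qf a d k m n x t = t * (a - S - t)" if "a - d - S - t \<le> 0" for t
  proof -
    have "(a - d - S - t) / (n + 1) \<le> 0" using that n1 by (simp add: divide_nonpos_pos)
    hence "clampk k ((a - d - (m - 1) * x - t) / (n + 1)) = 0" using clamp_zero[OF k] S_def by simp
    thus ?thesis unfolding Qf_def S_def by simp
  qed
  show False
  proof (cases "a - d < m * x")
    case True
    define p where "p = (a - S) / 2"
    have aS: "a - S = 2 * p" unfolding p_def by simp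
    have "a - m * x = 2 * p - x" using aS S_def by (simp add: algebra_simps)
    hence QXX2: "Qf a d k m n x x = x * (2 * p - x)" unfolding QXX by simp
    consider "p > x" | "p = x" | "p < x" by linarith
    thus False
    proof cases
      case 1
      have "a - d - S - p \<le> 0" using True 1 S_def by (simp add: algebra_simps)
      hence "Qf a d k m n x p = p * p" using Qform aS by simp
      moreover have "p \<ge> 0" using 1 x0 by simp
      moreover have "x * (2 * p - x) < p * p"
      proof -
        have "p * p - x * (2 * p - x) = (p - x)^2" by (simp add: power2_eq_square algebra_simps)
        moreover have "(p - x)^2 > 0" using 1 by simp
        ultimately show ?thesis by linarith
      qed
      ultimately show False using opt[of p] QXX2 by simp
    next
      case 2
      have "a = (m + 1) * x" using aS 2 S_def by (simp add: algebra_simps)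
      hence "x < d" using True by (simp add: algebra_simps)
      hence "(m + 1) * x < (m + 1) * d" using m by simp
      thus False using A1 \<open>a = (m + 1) * x\<close> by simp
    next
      case 3
      define t where "t = max 0 (max p (a - d - S))"
      have "m * d > 0" using m0 d by simp
      moreover have "a - d > m * d" using A1 by (simp add: algebra_simps)
      ultimately have "m * x > 0" using mx by simp
      hence xp: "x > 0" using m0 by (simp add: zero_less_mult_iff)
      have tx: "t < x" unfolding t_def using xp 3 True S_def by (simp add: algebra_simps)
      have tp: "t \<ge> p" "t \<ge> 0" unfolding t_def by auto
      have "a - d - S - t \<le> 0" unfolding t_def by simp
      hence "Qf a d k m n x t = t * (2 * p - t)" using Qform aS by simp
      moreover have "t * (2 * p - t) - x * (2 * p - x) = (x - t) * (t + x - 2 * p)"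
        by (simp add: algebra_simps)
      moreover have "(x - t) * (t + x - 2 * p) > 0" using tx tp 3 by simp
      ultimately show False using opt[OF tp(2)] QXX2 by simp
    qed
  next
    case False
    hence ax: "a = m * x + d" using mx by simp
    have QXX3: "Qf a d k m n x x = x * d" unfolding QXX using ax by simp
    have Qt: "Qf a d k m n x t = t * (x + d - t - n * clampk k ((x - t) / (n + 1)))" for t
      unfolding Qf_def ax by (simp add: algebra_simps)
    have e1: "a - (m + 1) * d = m * (x - d)" using ax by (simp add: algebra_simps)
    have "0 \<le> m * (x - d)" using A1 e1 by simp
    hence xd: "d \<le> x" using m0 by (simp add: zero_le_mult_iff)
    have "m * (x - d) > m * (n * d) \<or> m * (x - d) > m * (n * k + 2 * sqrt (n * k * d))"
      using A e1 by (simp add: algebra_simps min_def split: if_splits)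
    hence C: "x - d > n * d \<or> x - d > n * k + 2 * sqrt (n * k * d)" using m0 by auto
    show False
    proof (cases "x - d > n * d")
      case True
      define ts where "ts = (x + (n + 1) * d) / 2"
      define t where "t = max ts (x - (n + 1) * k)"
      have tsb: "ts > (n + 1) * d" "ts < x" unfolding ts_def using True by (simp_all add: algebra_simps)
      have tx: "t < x" unfolding t_def using tsb k n1 by simp
      have tge: "t > (n + 1) * d" unfolding t_def using tsb by simp
      have "(n + 1) * d > 0" using n1 d by simp
      hence t0: "t \<ge> 0" using tge by simp
      have "x - t \<le> (n + 1) * k" unfolding t_def by simp
      hence vk: "(x - t) / (n + 1) \<le> k" using n1 by (simp add: divide_le_eq mult.commute)
      have vp: "(x - t) / (n + 1) > 0" using tx n1 by simp
      have clv: "clampk k ((x - t) / (n + 1)) = (x - t) / (n + 1)" unfolding clampk_def using vk vp by simp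
      have "t * (x + d - t - n * ((x - t) / (n + 1))) - x * d = (x - t) * (t - (n + 1) * d) / (n + 1)"
        using n1 by (simp add: field_simps)
      moreover have "(x - t) * (t - (n + 1) * d) / (n + 1) > 0" using tx tge n1 by simp
      ultimately show False using opt[OF t0] QXX3 Qt[of t] clv by simp
    next
      case False
      hence C2: "x - d > n * k + 2 * sqrt (n * k * d)" using C by simp
      have g: "(x + d - n * k)^2 > 4 * x * d" "x + d - n * k \<ge> 0"
        using sqrt_bound_gt[OF d n0 k xd C2] by auto
      define t where "t = (x + d - n * k) / 2"
      have t0: "t \<ge> 0" unfolding t_def using g by simp
      have "n * d \<ge> x - d" using False by simp
      hence "n * d > n * k" using C2 sq0 by linarith
      hence dk: "d > k" using n0 by simp
      have "n * d \<ge> d" using n d by simp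
      hence "k * (n * d) \<ge> k * d" using k by simp
      moreover have "k * d \<ge> k * k" using dk k by simp
      ultimately have "n * k * d \<ge> k * k" by (simp add: algebra_simps)
      hence "sqrt (n * k * d) \<ge> sqrt (k * k)" by (rule real_sqrt_le_mono)
      hence "sqrt (n * k * d) \<ge> k" using k by simp
      hence "x - d > n * k + 2 * k" using C2 by simp
      hence "x - t \<ge> (n + 1) * k" unfolding t_def by (simp add: field_simps)
      hence "(x - t) / (n + 1) \<ge> k" using n1 by (simp add: le_divide_eq mult.commute)
      hence clv: "clampk k ((x - t) / (n + 1)) = k" unfolding clampk_def using k by simp
      have "Qf a d k m n x t = t * (x + d - t - n * k)" using Qt[of t] clv by simp
      moreover have "x + d - t - n * k = t" unfolding t_def by (simp add: field_simps)
      ultimately have "Qf a d k m n x t = t * t" by simp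
      moreover have "t * t > x * d" using g unfolding t_def by (simp add: power2_eq_square field_simps)
      ultimately show False using opt[OF t0] QXX3 by simp
    qed
  qed
qed




lemma spot_eq0:
  fixes \<alpha> \<beta> c k :: real and M N :: nat
  assumes b: "\<beta> > 0" and k: "k > 0"
  shows "spot_eq \<alpha> \<beta> c k M N (\<lambda>_. 0) x = (\<lambda>j. if j < N then clampk k ((\<alpha> - c - \<beta> * (\<Sum>i<M. x i)) / ((real N + 1) * \<beta>)) else 0)"
  unfolding spot_eq_def
  apply (rule the_equality)
   apply (rule cand_NE[OF b k])
  apply (erule NE_unique[OF b k])
  done

lemma arg_eq:
  fixes \<alpha> \<beta> c C X :: real and N :: nat
  assumes b: "\<beta> > 0"
  shows "(\<alpha> - c - \<beta> * X) / ((real N + 1) * \<beta>) = ((\<alpha> - C) / \<beta> - (c - C) / \<beta> - X) / (real N + 1)"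
  using b by (simp add: field_simps)

lemma lp:
  fixes \<alpha> \<beta> C c k x t :: real and M N :: nat
  assumes b: "\<beta> > 0" and k: "k > 0" and i: "i < M"
  shows "leader_payoff \<alpha> \<beta> C c k M N (\<lambda>_. 0) ((\<lambda>_. x)(i := t)) i
     = \<beta> * Qf ((\<alpha> - C) / \<beta>) ((c - C) / \<beta>) k (real M) (real N) x t"
proof -
  define X where "X = real M * x - x + t"
  have sX: "(\<Sum>i'<M. ((\<lambda>_. x)(i := t)) i') = X" unfolding X_def using sum_upd[OF i, of "\<lambda>_. x" t] by simp
  define w where "w = clampk k ((\<alpha> - c - \<beta> * X) / ((real N + 1) * \<beta>))"
  have sY: "(\<Sum>j<N. spot_eq \<alpha> \<beta> c k M N (\<lambda>_. 0) ((\<lambda>_. x)(i := t)) j) = real N * w"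
    unfolding spot_eq0[OF b k] sX w_def by simp
  have w2: "w = clampk k (((\<alpha> - C) / \<beta> - (c - C) / \<beta> - (real M - 1) * x - t) / (real N + 1))"
  proof -
    have "(\<alpha> - C) / \<beta> - (c - C) / \<beta> - X = (\<alpha> - C) / \<beta> - (c - C) / \<beta> - (real M - 1) * x - t"
      unfolding X_def by (simp add: algebra_simps)
    thus ?thesis unfolding w_def arg_eq[OF b, of \<alpha> c X N C] by (simp only:)
  qed
  have "leader_payoff \<alpha> \<beta> C c k M N (\<lambda>_. 0) ((\<lambda>_. x)(i := t)) i = (\<alpha> - \<beta> * (X + real N * w) - C) * t"
    unfolding leader_payoff_def sX sY price_def using i by simp
  also have "\<dots> = \<beta> * (t * ((\<alpha> - C) / \<beta> - (real M - 1) * x - t - real N * w))"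
    unfolding X_def using b by (simp add: field_simps)
  finally show ?thesis unfolding Qf_def w2 by simp
qed

lemma X0_iff:
  fixes \<alpha> \<beta> C c k x :: real and M N :: nat
  assumes b: "\<beta> > 0" and k: "k > 0" and M: "M \<ge> 1"
  shows "x \<in> X0 \<alpha> \<beta> C c k M N \<longleftrightarrow> 0 \<le> x \<and> (\<forall>t\<ge>0. Qf ((\<alpha> - C) / \<beta>) ((c - C) / \<beta>) k (real M) (real N) x t
        \<le> Qf ((\<alpha> - C) / \<beta>) ((c - C) / \<beta>) k (real M) (real N) x x)"
proof -
  have sym: "leader_payoff \<alpha> \<beta> C c k M N (\<lambda>_. 0) (\<lambda>_. x) i = \<beta> * Qf ((\<alpha> - C) / \<beta>) ((c - C) / \<beta>) k (real M) (real N) x x"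
    if "i < M" for i
  proof -
    have "(\<lambda>_. x)(i := x) = (\<lambda>_::nat. x)" by auto
    thus ?thesis using lp[OF b k that, of \<alpha> C c N x x] by simp
  qed
  let ?Q = "Qf ((\<alpha> - C) / \<beta>) ((c - C) / \<beta>) k (real M) (real N) x"
  have M0: "0 < M" using M by simp
  show ?thesis
  proof
    assume "x \<in> X0 \<alpha> \<beta> C c k M N"
    hence x0: "0 \<le> x" and H: "\<And>t. 0 \<le> t \<Longrightarrow> leader_payoff \<alpha> \<beta> C c k M N (\<lambda>_. 0) ((\<lambda>_. x)(0 := t)) 0
          \<le> leader_payoff \<alpha> \<beta> C c k M N (\<lambda>_. 0) (\<lambda>_. x) 0" unfolding X0_def using M0 by auto
    have "\<forall>t\<ge>0. ?Q t \<le> ?Q x"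
    proof (intro allI impI)
      fix t :: real assume t: "0 \<le> t"
      show "?Q t \<le> ?Q x" using H[OF t] unfolding lp[OF b k M0] sym[OF M0] using b by simp
    qed
    thus "0 \<le> x \<and> (\<forall>t\<ge>0. ?Q t \<le> ?Q x)" using x0 by simp
  next
    assume A: "0 \<le> x \<and> (\<forall>t\<ge>0. ?Q t \<le> ?Q x)"
    show "x \<in> X0 \<alpha> \<beta> C c k M N" unfolding X0_def
    proof (clarsimp, intro conjI allI impI)
      show "0 \<le> x" using A by simp
      fix i :: nat and t :: real assume i: "i < M" and t: "0 \<le> t"
      show "leader_payoff \<alpha> \<beta> C c k M N (\<lambda>_. 0) ((\<lambda>_. x)(i := t)) i
          \<le> leader_payoff \<alpha> \<beta> C c k M N (\<lambda>_. 0) (\<lambda>_. x) i"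
        unfolding lp[OF b k i] sym[OF i] using A t b by simp
    qed
  qed
qed

lemma spot_sym:
  fixes \<alpha> \<beta> C c k x :: real and M N :: nat
  assumes b: "\<beta> > 0" and k: "k > 0" and j: "j < N"
  shows "spot_eq \<alpha> \<beta> c k M N (\<lambda>_. 0) (\<lambda>_. x) j = clampk k (((\<alpha> - C) / \<beta> - (c - C) / \<beta> - real M * x) / (real N + 1))"
  unfolding spot_eq0[OF b k] using j arg_eq[OF b, of \<alpha> c "real M * x" N C] by simp




theorem lemma8:
  fixes \<alpha> \<beta> C c k :: real and M N :: nat
  assumes "M \<ge> 1" and "N \<ge> 2" and "\<alpha> > 0" and "\<beta> > 0"
    and "c \<ge> C" and "C > 0" and "k > 0"
    and "(c - C) / \<beta> > 0"
  defines "\<alpha>x \<equiv> (\<alpha> - C) / \<beta>" and "dC \<equiv> (c - C) / \<beta>"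
  defines "\<zeta>1 \<equiv> (real M + 1) * dC
              + min (real M * real N * dC)
                    (real M * real N * k + 2 * real M * sqrt (real N * k * dC))"
  shows "((\<exists>x \<in> X0 \<alpha> \<beta> C c k M N. \<forall>j<N. spot_eq \<alpha> \<beta> c k M N (\<lambda>_. 0) (\<lambda>_. x) j = 0)
           \<longleftrightarrow> \<alpha>x \<le> \<zeta>1)
       \<and> (0 \<le> \<alpha>x \<and> \<alpha>x < (real M + 1) * dC \<longrightarrow>
           (let x = \<alpha>x / (real M + 1) in
              x \<in> X0 \<alpha> \<beta> C c k M N \<and> (\<forall>j<N. spot_eq \<alpha> \<beta> c k M N (\<lambda>_. 0) (\<lambda>_. x) j = 0)))
       \<and> ((real M + 1) * dC \<le> \<alpha>x \<and> \<alpha>x \<le> \<zeta>1 \<longrightarrow>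
           (let x = (\<alpha>x - dC) / real M in
              x \<in> X0 \<alpha> \<beta> C c k M N \<and> (\<forall>j<N. spot_eq \<alpha> \<beta> c k M N (\<lambda>_. 0) (\<lambda>_. x) j = 0)))"
proof -
  have b: "\<beta> > 0" and k: "k > 0" and M1: "M \<ge> 1" using assms by auto
  have d: "dC > 0" using assms unfolding dC_def by simp
  have m: "real M \<ge> 1" using M1 by simp
  have n: "real N \<ge> 1" using assms by simp
  have n0: "real N \<ge> 0" "real N > 0" using n by auto
  let ?Q = "Qf \<alpha>x dC k (real M) (real N)"
  have X0c: "\<And>x. x \<in> X0 \<alpha> \<beta> C c k M N \<longleftrightarrow> 0 \<le> x \<and> (\<forall>t\<ge>0. ?Q x t \<le> ?Q x x)"
    unfolding \<alpha>x_def dC_def by (rule X0_iff[OF b k M1])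
  have SP: "\<And>x j. j < N \<Longrightarrow> spot_eq \<alpha> \<beta> c k M N (\<lambda>_. 0) (\<lambda>_. x) j = clampk k ((\<alpha>x - dC - real M * x) / (real N + 1))"
    unfolding \<alpha>x_def dC_def by (rule spot_sym[OF b k])
  have C1: "0 \<le> \<alpha>x \<and> \<alpha>x < (real M + 1) * dC \<longrightarrow>
           (let x = \<alpha>x / (real M + 1) in
              x \<in> X0 \<alpha> \<beta> C c k M N \<and> (\<forall>j<N. spot_eq \<alpha> \<beta> c k M N (\<lambda>_. 0) (\<lambda>_. x) j = 0))"
  proof (intro impI, elim conjE)
    assume a0: "0 \<le> \<alpha>x" and a1: "\<alpha>x < (real M + 1) * dC"
    have x0: "\<alpha>x / (real M + 1) \<ge> 0" using a0 m by simp
    have "clampk k ((\<alpha>x - dC - real M * (\<alpha>x / (real M + 1))) / (real N + 1)) = 0"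
      using Q_case1(2)[OF k n0(1) d m a0 a1 order_refl] by simp
    thus "(let x = \<alpha>x / (real M + 1) in
              x \<in> X0 \<alpha> \<beta> C c k M N \<and> (\<forall>j<N. spot_eq \<alpha> \<beta> c k M N (\<lambda>_. 0) (\<lambda>_. x) j = 0))"
      unfolding Let_def X0c using Q_case1(1)[OF k n0(1) d m a0 a1] x0 SP by auto
  qed
  have C2: "(real M + 1) * dC \<le> \<alpha>x \<and> \<alpha>x \<le> \<zeta>1 \<longrightarrow>
           (let x = (\<alpha>x - dC) / real M in
              x \<in> X0 \<alpha> \<beta> C c k M N \<and> (\<forall>j<N. spot_eq \<alpha> \<beta> c k M N (\<lambda>_. 0) (\<lambda>_. x) j = 0))"
  proof (intro impI, elim conjE)
    assume a0: "(real M + 1) * dC \<le> \<alpha>x" and a1: "\<alpha>x \<le> \<zeta>1"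
    have h1: "\<alpha>x - (real M + 1) * dC \<le> real M * real N * dC"
      and h2: "\<alpha>x - (real M + 1) * dC \<le> real M * real N * k + 2 * real M * sqrt (real N * k * dC)"
      using a1 unfolding \<zeta>1_def by auto
    have "\<alpha>x - dC \<ge> real M * dC" using a0 by (simp add: algebra_simps)
    moreover have "real M * dC \<ge> 0" using d by simp
    ultimately have x0: "(\<alpha>x - dC) / real M \<ge> 0" using m by simp
    have "clampk k ((\<alpha>x - dC - real M * ((\<alpha>x - dC) / real M)) / (real N + 1)) = 0"
      using Q_case2(2)[OF k n0(2) d m a0 h1 h2 order_refl] by simp
    thus "(let x = (\<alpha>x - dC) / real M in
              x \<in> X0 \<alpha> \<beta> C c k M N \<and> (\<forall>j<N. spot_eq \<alpha> \<beta> c k M N (\<lambda>_. 0) (\<lambda>_. x) j = 0))"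
      unfolding Let_def X0c using Q_case2(1)[OF k n0(2) d m a0 h1 h2] x0 SP by auto
  qed
  have C0: "(\<exists>x \<in> X0 \<alpha> \<beta> C c k M N. \<forall>j<N. spot_eq \<alpha> \<beta> c k M N (\<lambda>_. 0) (\<lambda>_. x) j = 0)
           \<longleftrightarrow> \<alpha>x \<le> \<zeta>1"
  proof
    assume "\<exists>x \<in> X0 \<alpha> \<beta> C c k M N. \<forall>j<N. spot_eq \<alpha> \<beta> c k M N (\<lambda>_. 0) (\<lambda>_. x) j = 0"
    then obtain x where xX: "x \<in> X0 \<alpha> \<beta> C c k M N" and sp: "\<forall>j<N. spot_eq \<alpha> \<beta> c k M N (\<lambda>_. 0) (\<lambda>_. x) j = 0" by blast
    have N0: "0 < N" using assms by simp
    have cl: "clampk k ((\<alpha>x - dC - real M * x) / (real N + 1)) = 0" using sp SP[OF N0] N0 by metis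
    have x0: "0 \<le> x" and opt: "\<And>t. 0 \<le> t \<Longrightarrow> ?Q x t \<le> ?Q x x" using xX X0c by auto
    show "\<alpha>x \<le> \<zeta>1" unfolding \<zeta>1_def using Q_conv[OF k n d m x0 opt cl] .
  next
    assume az: "\<alpha>x \<le> \<zeta>1"
    consider "\<alpha>x < 0" | "0 \<le> \<alpha>x \<and> \<alpha>x < (real M + 1) * dC" | "(real M + 1) * dC \<le> \<alpha>x" by linarith
    thus "\<exists>x \<in> X0 \<alpha> \<beta> C c k M N. \<forall>j<N. spot_eq \<alpha> \<beta> c k M N (\<lambda>_. 0) (\<lambda>_. x) j = 0"
    proof cases
      case 1
      have "0 \<in> X0 \<alpha> \<beta> C c k M N" unfolding X0c using Q_neg[OF k n0(1) d 1] by auto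
      moreover have "(\<alpha>x - dC - real M * 0) / (real N + 1) \<le> 0" using 1 d n0 by (simp add: divide_nonpos_pos)
      hence "\<forall>j<N. spot_eq \<alpha> \<beta> c k M N (\<lambda>_. 0) (\<lambda>_. 0) j = 0" using SP clamp_zero[OF k] by simp
      ultimately show ?thesis by blast
    next
      case 2 thus ?thesis using C1 unfolding Let_def by blast
    next
      case 3 thus ?thesis using C2 az unfolding Let_def by blast
    qed
  qed
  show ?thesis using C0 C1 C2 by blast
qed


end
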